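(* Let $\mathbb{D}$ be a division ring, let $2\le m,n<\infty$, let $P$ be an $n\times m$ matrix over $\mathbb{D}$ with $\operatorname{rank}P=r$, and let $\mathcal{A}=\mathfrak{M}(\mathbb{D}, m, n, P)$. Then: (1) if $r\ge 2$, then $\mathcal{A}=\sum[\mathcal{A},\mathcal{A}][\mathcal{A},\mathcal{A}]$, i.e. every element of $\mathcal{A}$ is a finite sum of products of pairs of commutators; (2) if $r=1$, then $\mathcal{A}=\sum[\mathcal{A},\mathcal{A}][\mathcal{A},\mathcal{A}]$ if and only if $\mathbb{D}$ is not commutative.
   Context: $\mathfrak{M}(\mathbb{D}, m, n, P)$ denotes the ring of all $m\times n$ matrices over the division ring $\mathbb{D}$ with entrywise addition and multiplication $A\bullet B = APB$. The commutator is $[x,y]=x\bullet y-y\bullet x$; for subsets $X,Y$, $[X,Y]=\{[x,y]:x\in X,y\in Y\}$ and $XY=\{x\bullet y: x\in X, y\in Y\}$. $\sum[\mathcal{A},\mathcal{A}][\mathcal{A},\mathcal{A}]$ denotes the set of all finite sums of elements of $[\mathcal{A},\mathcal{A}][\mathcal{A},\mathcal{A}]$. *)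

theory Defs
  imports Main
begin

text \<open>Matrices over a ring 'a are represented as functions nat => nat => 'a.
  The k x l matrices are those functions vanishing outside the index box
  {..<k} x {..<l}.\<close>

definition mat_set :: "nat \<Rightarrow> nat \<Rightarrow> (nat \<Rightarrow> nat \<Rightarrow> 'a::zero) set" where
  "mat_set k l = {A. \<forall>i j. A i j \<noteq> 0 \<longrightarrow> i < k \<and> j < l}"

definition mat_add :: "(nat \<Rightarrow> nat \<Rightarrow> 'a::plus) \<Rightarrow> (nat \<Rightarrow> nat \<Rightarrow> 'a) \<Rightarrow> nat \<Rightarrow> nat \<Rightarrow> 'a" where
  "mat_add A B = (\<lambda>i j. A i j + B i j)"

definition mat_sub :: "(nat \<Rightarrow> nat \<Rightarrow> 'a::minus) \<Rightarrow> (nat \<Rightarrow> nat \<Rightarrow> 'a) \<Rightarrow> nat \<Rightarrow> nat \<Rightarrow> 'a" where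
  "mat_sub A B = (\<lambda>i j. A i j - B i j)"

definition mat_mult :: "nat \<Rightarrow> (nat \<Rightarrow> nat \<Rightarrow> 'a::semiring_0) \<Rightarrow> (nat \<Rightarrow> nat \<Rightarrow> 'a) \<Rightarrow> nat \<Rightarrow> nat \<Rightarrow> 'a" where
  "mat_mult p A B = (\<lambda>i j. \<Sum>k<p. A i k * B k j)"

text \<open>Sandwich product A \<bullet> B = A P B in M(D, m, n, P), A, B m x n, P n x m.\<close>
definition sandwich :: "nat \<Rightarrow> nat \<Rightarrow> (nat \<Rightarrow> nat \<Rightarrow> 'a::semiring_0) \<Rightarrow> (nat \<Rightarrow> nat \<Rightarrow> 'a) \<Rightarrow> (nat \<Rightarrow> nat \<Rightarrow> 'a) \<Rightarrow> nat \<Rightarrow> nat \<Rightarrow> 'a" where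
  "sandwich m n P A B = mat_mult m (mat_mult n A P) B"

definition comm :: "nat \<Rightarrow> nat \<Rightarrow> (nat \<Rightarrow> nat \<Rightarrow> 'a::ring) \<Rightarrow> (nat \<Rightarrow> nat \<Rightarrow> 'a) \<Rightarrow> (nat \<Rightarrow> nat \<Rightarrow> 'a) \<Rightarrow> nat \<Rightarrow> nat \<Rightarrow> 'a" where
  "comm m n P A B = mat_sub (sandwich m n P A B) (sandwich m n P B A)"

definition comm_prods :: "nat \<Rightarrow> nat \<Rightarrow> (nat \<Rightarrow> nat \<Rightarrow> 'a::ring) \<Rightarrow> (nat \<Rightarrow> nat \<Rightarrow> 'a) set" where
  "comm_prods m n P = {sandwich m n P (comm m n P a b) (comm m n P c d) | a b c d.
      a \<in> mat_set m n \<and> b \<in> mat_set m n \<and> c \<in> mat_set m n \<and> d \<in> mat_set m n}"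

inductive_set fin_sums :: "(nat \<Rightarrow> nat \<Rightarrow> 'a::monoid_add) set \<Rightarrow> (nat \<Rightarrow> nat \<Rightarrow> 'a) set"
  for S where
  zero: "(\<lambda>i j. 0) \<in> fin_sums S"
| add: "x \<in> S \<Longrightarrow> y \<in> fin_sums S \<Longrightarrow> mat_add x y \<in> fin_sums S"

definition cols_indep :: "nat \<Rightarrow> (nat \<Rightarrow> nat \<Rightarrow> 'a::ring) \<Rightarrow> nat set \<Rightarrow> bool" where
  "cols_indep k P S = (\<forall>c::nat \<Rightarrow> 'a. (\<forall>i<k. (\<Sum>j\<in>S. P i j * c j) = 0) \<longrightarrow> (\<forall>j\<in>S. c j = 0))"

definition mat_rank :: "nat \<Rightarrow> nat \<Rightarrow> (nat \<Rightarrow> nat \<Rightarrow> 'a::ring) \<Rightarrow> nat" where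
  "mat_rank k l P = Max {card S | S. S \<subseteq> {..<l} \<and> cols_indep k P S}"

end

theory Submission
  imports Defs
begin


definition outer :: "(nat \<Rightarrow> 'a::times) \<Rightarrow> (nat \<Rightarrow> 'a) \<Rightarrow> nat \<Rightarrow> nat \<Rightarrow> 'a" where
  "outer p q = (\<lambda>i j. p i * q j)"

definition bil :: "nat \<Rightarrow> nat \<Rightarrow> (nat \<Rightarrow> nat \<Rightarrow> 'a::semiring_0) \<Rightarrow> (nat \<Rightarrow> 'a) \<Rightarrow> (nat \<Rightarrow> 'a) \<Rightarrow> 'a" where
  "bil m n P q p = (\<Sum>k<m. (\<Sum>l<n. q l * P l k) * p k)"

lemma sandwich_outer:
  "sandwich m n P (outer p q) (outer p' q') = outer (\<lambda>i. p i * bil m n P q p') (q'::nat \<Rightarrow> 'a::ring)"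
  unfolding sandwich_def mat_mult_def outer_def bil_def
  by (rule ext, rule ext) (simp add: sum_distrib_left sum_distrib_right mult.assoc)

lemma bil_scale_right: "bil m n P q (\<lambda>i. p i * y) = bil m n P q p * (y::'a::ring)"
  unfolding bil_def by (simp add: sum_distrib_right mult.assoc)

lemma bil_zero_right[simp]: "bil m n P q (\<lambda>i. 0::'a::ring) = 0"
  unfolding bil_def by simp

lemma bil_diff_right: "bil m n P q (\<lambda>i. p i - w i * y) = bil m n P q p - bil m n P q w * (y::'a::ring)"
  unfolding bil_def by (simp add: sum_distrib_right mult.assoc sum_subtractf right_diff_distrib)

lemma bil_diff_left: "bil m n P (\<lambda>j. q j - y * z j) w = bil m n P q w - (y::'a::ring) * bil m n P z w"
  unfolding bil_def by (simp add: sum_distrib_right sum_distrib_left mult.assoc sum_subtractf left_diff_distrib right_diff_distrib)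

lemma sandwich_sub_left: "sandwich m n P (mat_sub A B) C = mat_sub (sandwich m n P A C) (sandwich m n P B (C::nat\<Rightarrow>nat\<Rightarrow>'a::ring))"
  unfolding sandwich_def mat_mult_def mat_sub_def
  by (simp add: sum_subtractf left_diff_distrib)

lemma sandwich_sub_right: "sandwich m n P A (mat_sub B C) = mat_sub (sandwich m n P A B) (sandwich m n P A (C::nat\<Rightarrow>nat\<Rightarrow>'a::ring))"
  unfolding sandwich_def mat_mult_def mat_sub_def
  by (simp add: sum_subtractf right_diff_distrib)

lemma comm_outer: "comm m n P (outer p1 q1) (outer p2 q2) =
   mat_sub (outer (\<lambda>i. p1 i * bil m n P q1 p2) q2) (outer (\<lambda>i. p2 i * bil m n P q2 p1) (q1::nat\<Rightarrow>'a::ring))"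
  unfolding comm_def by (simp add: sandwich_outer)

lemma constr2:
  fixes P :: "nat \<Rightarrow> nat \<Rightarrow> 'a::ring_1"
  assumes "bil m n P z1 u1 = 1" "bil m n P z2 u2 = 1" "bil m n P z2 u1 = 0" "bil m n P z1 u2 = 0"
  shows "sandwich m n P (comm m n P (outer p z1) (outer u1 z2)) (comm m n P (outer u2 z1) (outer u1 q))
    = (\<lambda>i j. p i * q j + u1 i * (bil m n P z2 p * bil m n P q u2) * z1 j)"
  by (simp add: comm_outer sandwich_sub_left sandwich_sub_right sandwich_outer bil_scale_right assms)
     (simp add: mat_sub_def outer_def algebra_simps)

definition vec_in :: "nat \<Rightarrow> (nat \<Rightarrow> 'a::zero) \<Rightarrow> bool" where
  "vec_in k v = (\<forall>i. v i \<noteq> 0 \<longrightarrow> i < k)"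

lemma vec_in_scale: "vec_in k p \<Longrightarrow> vec_in k (\<lambda>i. p i * (y::'a::ring))"
  unfolding vec_in_def by (metis mult_zero_left)

lemma vec_in_diff: "vec_in k p \<Longrightarrow> vec_in k w \<Longrightarrow> vec_in k (\<lambda>i. p i - w i * (y::'a::ring))"
  unfolding vec_in_def by (metis diff_zero mult_zero_left)

lemma vec_in_diff2: "vec_in k p \<Longrightarrow> vec_in k w \<Longrightarrow> vec_in k (\<lambda>i. p i - (y::'a::ring) * w i)"
  unfolding vec_in_def by (metis diff_zero mult_zero_right)

lemma outer_in:
  assumes "vec_in m p" "vec_in n q"
  shows "outer p (q::nat \<Rightarrow> 'a::ring) \<in> mat_set m n"
  unfolding mat_set_def outer_def
proof (intro CollectI allI impI)
  fix i j assume "p i * q j \<noteq> 0"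
  then have "p i \<noteq> 0" "q j \<noteq> 0" by auto
  then show "i < m \<and> j < n" using assms unfolding vec_in_def by auto
qed

lemma sandwich_in:
  assumes "A \<in> mat_set m n" "B \<in> mat_set m n"
  shows "sandwich m n P A (B::nat\<Rightarrow>nat\<Rightarrow>'a::ring) \<in> mat_set m n"
proof -
  have "sandwich m n P A B i j = 0" if "\<not> (i < m \<and> j < n)" for i j
  proof (cases "i < m")
    case True
    then have "j \<ge> n" using that by auto
    then have "\<And>k. B k j = 0" using assms(2) unfolding mat_set_def by (auto simp: not_less[symmetric])
    then show ?thesis unfolding sandwich_def mat_mult_def by simp
  next
    case False
    then have "\<And>k. A i k = 0" using assms(1) unfolding mat_set_def by auto
    then show ?thesis unfolding sandwich_def mat_mult_def by simp
  qed
  then show ?thesis unfolding mat_set_def by blast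
qed

lemma mat_sub_in: "A \<in> mat_set m n \<Longrightarrow> B \<in> mat_set m n \<Longrightarrow> mat_sub A (B::nat\<Rightarrow>nat\<Rightarrow>'a::ring) \<in> mat_set m n"
  unfolding mat_set_def mat_sub_def
proof (intro CollectI allI impI)
  fix i j assume a: "A \<in> {A. \<forall>i j. A i j \<noteq> 0 \<longrightarrow> i < m \<and> j < n}" "B \<in> {A. \<forall>i j. A i j \<noteq> 0 \<longrightarrow> i < m \<and> j < n}"
    and "A i j - B i j \<noteq> 0"
  then have "A i j \<noteq> 0 \<or> B i j \<noteq> 0" by auto
  then show "i < m \<and> j < n" using a by blast
qed

lemma mat_add_in: "A \<in> mat_set m n \<Longrightarrow> B \<in> mat_set m n \<Longrightarrow> mat_add A (B::nat\<Rightarrow>nat\<Rightarrow>'a::ring) \<in> mat_set m n"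
  unfolding mat_set_def mat_add_def
proof (intro CollectI allI impI)
  fix i j assume a: "A \<in> {A. \<forall>i j. A i j \<noteq> 0 \<longrightarrow> i < m \<and> j < n}" "B \<in> {A. \<forall>i j. A i j \<noteq> 0 \<longrightarrow> i < m \<and> j < n}"
    and "A i j + B i j \<noteq> 0"
  then have "A i j \<noteq> 0 \<or> B i j \<noteq> 0" by auto
  then show "i < m \<and> j < n" using a by blast
qed

lemma comm_in: "A \<in> mat_set m n \<Longrightarrow> B \<in> mat_set m n \<Longrightarrow> comm m n P A (B::nat\<Rightarrow>nat\<Rightarrow>'a::ring) \<in> mat_set m n"
  unfolding comm_def by (intro mat_sub_in sandwich_in)

lemma comm_prods_sub: "comm_prods m n (P::nat\<Rightarrow>nat\<Rightarrow>'a::ring) \<subseteq> mat_set m n"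
  unfolding comm_prods_def by (auto intro!: sandwich_in comm_in)

lemma fin_sums_sub: "fin_sums (comm_prods m n (P::nat\<Rightarrow>nat\<Rightarrow>'a::ring)) \<subseteq> mat_set m n"
proof
  fix x assume "x \<in> fin_sums (comm_prods m n P)"
  then show "x \<in> mat_set m n"
  proof induct
    case zero
    then show ?case unfolding mat_set_def by simp
  next
    case (add x y)
    then show ?case using comm_prods_sub by (blast intro: mat_add_in)
  qed
qed

lemma fin_sums_add: "x \<in> fin_sums S \<Longrightarrow> y \<in> fin_sums S \<Longrightarrow> mat_add x y \<in> fin_sums S"
proof (induct x rule: fin_sums.induct)
  case zero
  then show ?case by (simp add: mat_add_def)
next
  case (add x z)
  have "mat_add (mat_add x z) y = mat_add x (mat_add z y)"
    unfolding mat_add_def by (simp add: add.assoc)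
  then show ?case using add by (simp add: fin_sums.add)
qed

lemma fin_sums_single: "x \<in> S \<Longrightarrow> x \<in> fin_sums S"
proof -
  assume "x \<in> S"
  then have "mat_add x (\<lambda>i j. 0) \<in> fin_sums S" by (intro fin_sums.add fin_sums.zero)
  moreover have "mat_add x (\<lambda>i j. 0) = x" unfolding mat_add_def by simp
  ultimately show ?thesis by simp
qed

lemma fin_sums_sum:
  assumes "finite K" "\<forall>k\<in>K. f k \<in> fin_sums S"
  shows "(\<lambda>i j. \<Sum>k\<in>K. f k i j) \<in> fin_sums S"
  using assms
proof (induct K rule: finite_induct)
  case empty
  then show ?case by (simp add: fin_sums.zero)
next
  case (insert x F)
  have "(\<lambda>i j. \<Sum>k\<in>insert x F. f k i j) = mat_add (f x) (\<lambda>i j. \<Sum>k\<in>F. f k i j)"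
    using insert unfolding mat_add_def by simp
  then show ?case using insert by (simp add: fin_sums_add)
qed

lemma decomp:
  assumes "\<And>p q. vec_in m p \<Longrightarrow> vec_in n q \<Longrightarrow> outer p q \<in> fin_sums S"
    and "X \<in> mat_set m n"
  shows "(X::nat\<Rightarrow>nat\<Rightarrow>'a::ring_1) \<in> fin_sums S"
proof -
  define f where "f k = outer (\<lambda>i. X i k) (\<lambda>j. if j = k then 1 else (0::'a))" for k
  have "X = (\<lambda>i j. \<Sum>k\<in>{..<n}. f k i j)"
  proof (intro ext)
    fix i j
    show "X i j = (\<Sum>k\<in>{..<n}. f k i j)"
    proof (cases "j < n")
      case True
      then show ?thesis unfolding f_def outer_def by (simp add: if_distrib cong: if_cong)
    next
      case False
      then have "X i j = 0" using assms(2) unfolding mat_set_def by blast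
      then show ?thesis using False unfolding f_def outer_def by auto
    qed
  qed
  moreover have "\<forall>k\<in>{..<n}. f k \<in> fin_sums S"
  proof
    fix k assume k: "k \<in> {..<n}"
    have "vec_in m (\<lambda>i. X i k)" using assms(2) unfolding vec_in_def mat_set_def by blast
    moreover have "vec_in n (\<lambda>j. if j = k then 1 else (0::'a))" using k unfolding vec_in_def by auto
    ultimately show "f k \<in> fin_sums S" unfolding f_def by (rule assms(1))
  qed
  ultimately show ?thesis using fin_sums_sum[of "{..<n}" f S] by simp
qed

lemma cp_in:
  "a \<in> mat_set m n \<Longrightarrow> b \<in> mat_set m n \<Longrightarrow> c \<in> mat_set m n \<Longrightarrow> d \<in> mat_set m n \<Longrightarrow>
   sandwich m n P (comm m n P a b) (comm m n P c d) \<in> fin_sums (comm_prods m n P)"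
  by (rule fin_sums_single) (unfold comm_prods_def, blast)

lemma constrT1:
  fixes P :: "nat \<Rightarrow> nat \<Rightarrow> 'a::ring_1"
  assumes "bil m n P z w = 1" "bil m n P z p = 0" "bil m n P q w = 0"
  shows "sandwich m n P (comm m n P (outer p z) (outer w z)) (comm m n P (outer w z) (outer w q))
    = outer p q"
  by (simp add: comm_outer sandwich_sub_left sandwich_sub_right sandwich_outer bil_scale_right assms)
     (simp add: mat_sub_def outer_def algebra_simps)

lemma constrT2:
  fixes P :: "nat \<Rightarrow> nat \<Rightarrow> 'a::ring_1"
  assumes "bil m n P z w = 1" "bil m n P q w = 0"
  shows "sandwich m n P (comm m n P (outer (\<lambda>i. w i * a) z) (outer (\<lambda>i. w i * b) z))
          (comm m n P (outer w z) (outer (\<lambda>i. w i * t) q))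
    = (\<lambda>i j. w i * ((a * b - b * a) * t) * q j)"
  by (simp add: comm_outer sandwich_sub_left sandwich_sub_right sandwich_outer bil_scale_right assms)
     (simp add: mat_sub_def outer_def algebra_simps)

lemma constrT3:
  fixes P :: "nat \<Rightarrow> nat \<Rightarrow> 'a::ring_1"
  assumes "bil m n P z w = 1" "bil m n P z p = 0"
  shows "sandwich m n P (comm m n P (outer (\<lambda>i. p i * s) z) (outer w z))
          (comm m n P (outer (\<lambda>i. w i * a) z) (outer (\<lambda>i. w i * b) z))
    = (\<lambda>i j. p i * (s * (a * b - b * a)) * z j)"
  by (simp add: comm_outer sandwich_sub_left sandwich_sub_right sandwich_outer bil_scale_right assms)
     (simp add: mat_sub_def outer_def algebra_simps)

lemma constrC:
  fixes P :: "nat \<Rightarrow> nat \<Rightarrow> 'a::ring_1"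
  assumes "bil m n P z w = 1"
  shows "sandwich m n P (comm m n P (outer (\<lambda>i. w i * s) z) (outer (\<lambda>i. w i * t) z))
          (comm m n P (outer (\<lambda>i. w i * s') z) (outer (\<lambda>i. w i * t') z))
    = (\<lambda>i j. w i * ((s * t - t * s) * (s' * t' - t' * s')) * z j)"
  by (simp add: comm_outer sandwich_sub_left sandwich_sub_right sandwich_outer bil_scale_right assms)
     (simp add: mat_sub_def outer_def algebra_simps)

lemma key_scalar:
  fixes a b x :: "'a::division_ring"
  assumes "a * b \<noteq> b * a"
  defines "c \<equiv> a * b - b * a"
  defines "u \<equiv> x * inverse (c * c)"
  shows "((u * a) * b - b * (u * a)) * (a * b - b * a) + (b * u - u * b) * (a * (a * b) - (a * b) * a) = x"
proof -
  have c0: "c * c \<noteq> 0" using assms(1) unfolding c_def by simp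
  have "((u * a) * b - b * (u * a)) * (a * b - b * a) + (b * u - u * b) * (a * (a * b) - (a * b) * a)
      = u * (c * c)" unfolding c_def by (simp add: algebra_simps)
  also have "\<dots> = x" unfolding u_def using c0 by (simp add: mult.assoc)
  finally show ?thesis .
qed

lemma rank1_outer:
  fixes P :: "nat \<Rightarrow> nat \<Rightarrow> 'a::division_ring" and a b :: 'a
  assumes w: "vec_in m w" and z: "vec_in n z" and bzw: "bil m n P z w = 1"
    and ab: "a * b \<noteq> b * a" and p: "vec_in m p" and q: "vec_in n q"
  shows "outer p q \<in> fin_sums (comm_prods m n P)"
proof -
  define c where "c = a * b - b * a"
  have c0: "c \<noteq> 0" using ab unfolding c_def by simp
  define y2 where "y2 = bil m n P z p"
  define y3 where "y3 = bil m n P q w"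
  define p' where "p' = (\<lambda>i. p i - w i * y2)"
  define q' where "q' = (\<lambda>j. q j - y3 * z j)"
  have bz: "bil m n P z p' = 0" unfolding p'_def by (simp add: bil_diff_right bzw y2_def)
  have bq: "bil m n P q' w = 0" unfolding q'_def by (simp add: bil_diff_left bzw y3_def)
  define t where "t = inverse c * y2"
  define s where "s = y3 * inverse c"
  define u where "u = (y2 * y3) * inverse (c * c)"
  have ct: "c * t = y2" unfolding t_def using c0 by (simp add: mult.assoc[symmetric])
  have sc: "s * c = y3" unfolding s_def using c0 by (simp add: mult.assoc)
  have key: "((u * a) * b - b * (u * a)) * (a * b - b * a) + (b * u - u * b) * (a * (a * b) - (a * b) * a) = y2 * y3"
    using key_scalar[OF ab, of "y2 * y3"] unfolding u_def c_def by simp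
  define T1 where "T1 = sandwich m n P (comm m n P (outer p' z) (outer w z)) (comm m n P (outer w z) (outer w q'))"
  define T2 where "T2 = sandwich m n P (comm m n P (outer (\<lambda>i. w i * a) z) (outer (\<lambda>i. w i * b) z))
          (comm m n P (outer w z) (outer (\<lambda>i. w i * t) q'))"
  define T3 where "T3 = sandwich m n P (comm m n P (outer (\<lambda>i. p' i * s) z) (outer w z))
          (comm m n P (outer (\<lambda>i. w i * a) z) (outer (\<lambda>i. w i * b) z))"
  define T4 where "T4 = sandwich m n P (comm m n P (outer (\<lambda>i. w i * (u * a)) z) (outer (\<lambda>i. w i * b) z))
          (comm m n P (outer (\<lambda>i. w i * a) z) (outer (\<lambda>i. w i * b) z))"
  define T5 where "T5 = sandwich m n P (comm m n P (outer (\<lambda>i. w i * b) z) (outer (\<lambda>i. w i * u) z))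
          (comm m n P (outer (\<lambda>i. w i * a) z) (outer (\<lambda>i. w i * (a * b)) z))"
  have e1: "T1 = outer p' q'" unfolding T1_def by (rule constrT1[OF bzw bz bq])
  have e2: "T2 = (\<lambda>i j. w i * y2 * q' j)" unfolding T2_def constrT2[OF bzw bq] c_def[symmetric] ct ..
  have e3: "T3 = (\<lambda>i j. p' i * y3 * z j)" unfolding T3_def constrT3[OF bzw bz] c_def[symmetric] sc ..
  have e4: "T4 = (\<lambda>i j. w i * (((u * a) * b - b * (u * a)) * (a * b - b * a)) * z j)"
    unfolding T4_def by (rule constrC[OF bzw])
  have e5: "T5 = (\<lambda>i j. w i * ((b * u - u * b) * (a * (a * b) - (a * b) * a)) * z j)"
    unfolding T5_def by (rule constrC[OF bzw])
  have sum: "outer p q = mat_add T1 (mat_add T2 (mat_add T3 (mat_add T4 T5)))"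
  proof (intro ext)
    fix i j
    have "w i * (((u * a) * b - b * (u * a)) * (a * b - b * a)) * z j
        + w i * ((b * u - u * b) * (a * (a * b) - (a * b) * a)) * z j = w i * (y2 * y3) * z j"
      by (simp only: key[symmetric] distrib_left distrib_right)
    then show "outer p q i j = mat_add T1 (mat_add T2 (mat_add T3 (mat_add T4 T5))) i j"
      unfolding e1 e2 e3 e4 e5 mat_add_def outer_def p'_def q'_def
      by (simp add: algebra_simps)
  qed
  have wz: "\<And>x. outer (\<lambda>i. w i * x) z \<in> mat_set m n"
    by (intro outer_in vec_in_scale w z)
  have wz1: "outer w z \<in> mat_set m n" by (intro outer_in w z)
  have p'in: "vec_in m p'" unfolding p'_def by (intro vec_in_diff p w)
  have q'in: "vec_in n q'" unfolding q'_def by (intro vec_in_diff2 q z)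
  have i1: "T1 \<in> fin_sums (comm_prods m n P)" unfolding T1_def
    by (intro cp_in outer_in p'in z w q'in wz1)
  have i2: "T2 \<in> fin_sums (comm_prods m n P)" unfolding T2_def
    by (intro cp_in outer_in wz wz1 vec_in_scale w q'in)
  have i3: "T3 \<in> fin_sums (comm_prods m n P)" unfolding T3_def
    by (intro cp_in outer_in wz wz1 vec_in_scale p'in z)
  have i4: "T4 \<in> fin_sums (comm_prods m n P)" unfolding T4_def
    by (intro cp_in wz)
  have i5: "T5 \<in> fin_sums (comm_prods m n P)" unfolding T5_def
    by (intro cp_in wz)
  show ?thesis unfolding sum by (intro fin_sums_add i1 i2 i3 i4 i5)
qed

lemma rank2_outer:
  fixes P :: "nat \<Rightarrow> nat \<Rightarrow> 'a::ring_1"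
  assumes u1: "vec_in m u1" and u2: "vec_in m u2" and z1: "vec_in n z1" and z2: "vec_in n z2"
    and b11: "bil m n P z1 u1 = 1" and b22: "bil m n P z2 u2 = 1"
    and b21: "bil m n P z2 u1 = 0" and b12: "bil m n P z1 u2 = 0"
    and p: "vec_in m p" and q: "vec_in n q"
  shows "outer p q \<in> fin_sums (comm_prods m n P)"
proof -
  define y where "y = - (bil m n P z2 p * bil m n P q u2)"
  define C1 where "C1 = sandwich m n P (comm m n P (outer p z1) (outer u1 z2)) (comm m n P (outer u2 z1) (outer u1 q))"
  define C2 where "C2 = sandwich m n P (comm m n P (outer (\<lambda>i. u1 i * y) z1) (outer u1 z2)) (comm m n P (outer u2 z1) (outer u1 z1))"
  have e1: "C1 = (\<lambda>i j. p i * q j + u1 i * (bil m n P z2 p * bil m n P q u2) * z1 j)"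
    unfolding C1_def by (rule constr2[OF b11 b22 b21 b12])
  have e2: "C2 = (\<lambda>i j. u1 i * y * z1 j)"
    unfolding C2_def constr2[OF b11 b22 b21 b12] by (simp add: bil_scale_right b21)
  have sum: "outer p q = mat_add C1 C2"
    unfolding e1 e2 mat_add_def outer_def y_def by (intro ext) (simp add: algebra_simps)
  have i1: "C1 \<in> fin_sums (comm_prods m n P)" unfolding C1_def
    by (intro cp_in outer_in p z1 u1 z2 u2 q)
  have i2: "C2 \<in> fin_sums (comm_prods m n P)" unfolding C2_def
    by (intro cp_in outer_in vec_in_scale z1 u1 z2 u2)
  show ?thesis unfolding sum by (intro fin_sums_add i1 i2)
qed

lemma rank_set_finite: "finite {card S | S. S \<subseteq> {..<m} \<and> cols_indep n P S}"
proof -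
  have "{card S | S. S \<subseteq> {..<m} \<and> cols_indep n P S} \<subseteq> card ` Pow {..<m}" by auto
  then show ?thesis by (rule finite_subset) simp
qed

lemma rank_ge: "S \<subseteq> {..<m} \<Longrightarrow> cols_indep n P S \<Longrightarrow> card S \<le> mat_rank n m P"
  unfolding mat_rank_def by (rule Max_ge[OF rank_set_finite]) blast

lemma rank_obtain: "\<exists>S. S \<subseteq> {..<m} \<and> cols_indep n P S \<and> card S = mat_rank n m P"
proof -
  have "cols_indep n P {}" unfolding cols_indep_def by simp
  then have ne: "{card S | S. S \<subseteq> {..<m} \<and> cols_indep n P S} \<noteq> {}" by blast
  have "mat_rank n m P \<in> {card S | S. S \<subseteq> {..<m} \<and> cols_indep n P S}"
    unfolding mat_rank_def by (rule Max_in[OF rank_set_finite ne])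
  then show ?thesis by auto
qed

lemma sum_two_pts:
  assumes "finite S" "k1 \<in> S" "k2 \<in> S" "k1 \<noteq> k2"
  shows "(\<Sum>j\<in>S. (f j::'a::ring) * (if j = k1 then c1 else if j = k2 then c2 else 0)) = f k1 * c1 + f k2 * c2"
proof -
  have "(\<Sum>j\<in>S. f j * (if j = k1 then c1 else if j = k2 then c2 else 0))
      = (\<Sum>j\<in>S. (if j = k1 then f k1 * c1 else 0) + (if j = k2 then f k2 * c2 else 0))"
    by (rule sum.cong) (use assms(4) in auto)
  also have "\<dots> = f k1 * c1 + f k2 * c2" using assms by (simp add: sum.distrib)
  finally show ?thesis .
qed

lemma indep_two:
  assumes "cols_indep n P S" "finite S" "k1 \<in> S" "k2 \<in> S" "k1 \<noteq> k2"
    and "\<forall>i<n. P i k1 * c1 + P i k2 * c2 = (0::'a::ring)"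
  shows "c1 = 0 \<and> c2 = 0"
proof -
  define c where "c = (\<lambda>j. if j = k1 then c1 else if j = k2 then c2 else 0)"
  have "\<forall>i<n. (\<Sum>j\<in>S. P i j * c j) = 0"
  proof (intro allI impI)
    fix i assume i: "i < n"
    have "(\<Sum>j\<in>S. P i j * c j) = P i k1 * c1 + P i k2 * c2"
      unfolding c_def by (rule sum_two_pts[OF assms(2-5)])
    then show "(\<Sum>j\<in>S. P i j * c j) = 0" using assms(6) i by simp
  qed
  then have "\<forall>j\<in>S. c j = 0" using assms(1) unfolding cols_indep_def by blast
  then show ?thesis using assms(3,4,5) unfolding c_def by force
qed

lemma dep_two:
  assumes "\<not> cols_indep n P {k1, k2}" "k1 \<noteq> k2"
  shows "\<exists>c1 c2. (c1 \<noteq> 0 \<or> c2 \<noteq> 0) \<and> (\<forall>i<n. P i k1 * c1 + P i k2 * c2 = (0::'a::ring))"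
proof -
  obtain c where c: "\<forall>i<n. (\<Sum>j\<in>{k1,k2}. P i j * c j) = 0" "\<exists>j\<in>{k1,k2}. c j \<noteq> 0"
    using assms(1) unfolding cols_indep_def by blast
  then show ?thesis using assms(2) by (intro exI[of _ "c k1"] exI[of _ "c k2"]) auto
qed


lemma inv_cancel1: "(x::'a::division_ring) \<noteq> 0 \<Longrightarrow> inverse x * (x * y) = y"
  by (simp add: mult.assoc[symmetric])
lemma inv_cancel2: "(x::'a::division_ring) \<noteq> 0 \<Longrightarrow> x * (inverse x * y) = y"
  by (simp add: mult.assoc[symmetric])

lemma bil_single:
  assumes "k < m"
  shows "bil m n P z (\<lambda>k'. if k' = k then y else 0) = (\<Sum>l<n. z l * P l k) * (y::'a::ring)"
proof -
  have "bil m n P z (\<lambda>k'. if k' = k then y else 0) = (\<Sum>k'<m. if k' = k then (\<Sum>l<n. z l * P l k) * y else 0)"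
    unfolding bil_def by (rule sum.cong) auto
  also have "\<dots> = (\<Sum>l<n. z l * P l k) * y" using assms by simp
  finally show ?thesis .
qed

lemma sum_two_pts':
  assumes "finite S" "k1 \<in> S" "k2 \<in> S" "k1 \<noteq> k2"
  shows "(\<Sum>j\<in>S. (if j = k1 then c1 else if j = k2 then c2 else 0) * (f j::'a::ring)) = c1 * f k1 + c2 * f k2"
proof -
  have "(\<Sum>j\<in>S. (if j = k1 then c1 else if j = k2 then c2 else 0) * f j)
      = (\<Sum>j\<in>S. (if j = k1 then c1 * f k1 else 0) + (if j = k2 then c2 * f k2 else 0))"
    by (rule sum.cong) (use assms(4) in auto)
  also have "\<dots> = c1 * f k1 + c2 * f k2" using assms by (simp add: sum.distrib)
  finally show ?thesis .
qed

lemma dual_exists: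
  fixes P :: "nat \<Rightarrow> nat \<Rightarrow> 'a::division_ring"
  assumes k1: "k1 < m" and k2: "k2 < m"
    and indep: "\<forall>c1 c2. (\<forall>i<n. P i k1 * c1 + P i k2 * c2 = 0) \<longrightarrow> c1 = 0 \<and> c2 = 0"
  shows "\<exists>u1 u2 z1 z2. vec_in m u1 \<and> vec_in m u2 \<and> vec_in n z1 \<and> vec_in n z2 \<and>
     bil m n P z1 u1 = 1 \<and> bil m n P z2 u2 = 1 \<and> bil m n P z2 u1 = 0 \<and> bil m n P z1 u2 = 0"
proof -
  have "\<exists>s<n. P s k1 \<noteq> 0"
  proof (rule ccontr)
    assume "\<not> ?thesis"
    then have "\<forall>i<n. P i k1 * 1 + P i k2 * 0 = 0" by auto
    from mp[OF indep[THEN spec, THEN spec] this] show False by simp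
  qed
  then obtain s where s: "s < n" "P s k1 \<noteq> 0" by blast
  define a where "a = P s k1"
  define b where "b = P s k2"
  have a0: "a \<noteq> 0" using s a_def by simp
  have "\<exists>t<n. P t k2 - P t k1 * (inverse a * b) \<noteq> 0"
  proof (rule ccontr)
    assume "\<not> ?thesis"
    then have "\<forall>i<n. P i k1 * (- (inverse a * b)) + P i k2 * 1 = 0" by (simp add: algebra_simps)
    from mp[OF indep[THEN spec, THEN spec] this] show False by simp
  qed
  then obtain t where t: "t < n" "P t k2 - P t k1 * (inverse a * b) \<noteq> 0" by blast
  define c where "c = P t k1"
  define d where "d = P t k2"
  define \<delta> where "\<delta> = d - c * (inverse a * b)"
  have d0: "\<delta> \<noteq> 0" using t unfolding \<delta>_def c_def d_def by simp
  have ts: "t \<noteq> s"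
  proof
    assume "t = s"
    then have "\<delta> = b - a * (inverse a * b)" unfolding \<delta>_def c_def d_def a_def b_def by simp
    also have "\<dots> = 0" using a0 by (simp add: inv_cancel2)
    finally show False using d0 by simp
  qed
  have dd: "d = \<delta> + c * (inverse a * b)" unfolding \<delta>_def by simp
  define g where "g = - (c * inverse a)"
  define h where "h = b * inverse \<delta>"
  define z2 where "z2 = (\<lambda>l. if l = s then g else if l = t then 1 else 0)"
  define z1 where "z1 = (\<lambda>l. if l = s then 1 - h * g else if l = t then - h else 0)"
  define u1 where "u1 = (\<lambda>k. if k = k1 then inverse a else 0)"
  define u2 where "u2 = (\<lambda>k. if k = k2 then inverse \<delta> else 0)"
  have sz: "\<And>x y k. (\<Sum>l<n. (if l = s then x else if l = t then y else 0) * P l k) = x * P s k + y * P t k"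
    by (rule sum_two_pts') (use s t ts in auto)
  have bu1: "\<And>x y. bil m n P (\<lambda>l. if l = s then x else if l = t then y else 0) u1 = (x * a + y * c) * inverse a"
    unfolding u1_def using k1 by (simp add: bil_single sz a_def c_def)
  have bu2: "\<And>x y. bil m n P (\<lambda>l. if l = s then x else if l = t then y else 0) u2 = (x * b + y * d) * inverse \<delta>"
    unfolding u2_def using k2 by (simp add: bil_single sz b_def d_def)
  have ga: "g * a = - c" unfolding g_def using a0 by (simp add: mult.assoc)
  have r11: "bil m n P z1 u1 = 1" unfolding z1_def bu1
    by (simp add: algebra_simps ga a0)
  have r21: "bil m n P z2 u1 = 0" unfolding z2_def bu1
    by (simp add: algebra_simps ga)
  have r22: "bil m n P z2 u2 = 1" unfolding z2_def bu2 dd g_def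
    by (simp add: algebra_simps d0)
  have r12: "bil m n P z1 u2 = 0" unfolding z1_def bu2 dd h_def g_def
    by (simp add: algebra_simps d0 inv_cancel1 inv_cancel2)
  have "vec_in m u1" "vec_in m u2" unfolding u1_def u2_def vec_in_def using k1 k2 by auto
  moreover have "vec_in n z1" "vec_in n z2" unfolding z1_def z2_def vec_in_def using s t by auto
  ultimately show ?thesis using r11 r21 r22 r12 by blast
qed



lemma minor_id:
  fixes P :: "nat \<Rightarrow> nat \<Rightarrow> 'a::division_ring"
  assumes comm: "\<And>x y::'a. x * y = y * x"
    and nodep: "\<forall>k b. k < m \<longrightarrow> b < m \<longrightarrow> k \<noteq> b \<longrightarrow> \<not> cols_indep n P {k, b}"
    and a: "a < n" and l: "l < n" and k: "k < m" and b: "b < m"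
  shows "P a k * P l b = P a b * P l k"
proof (cases "k = b")
  case True
  then show ?thesis by simp
next
  case False
  obtain c1 c2 where c: "c1 \<noteq> 0 \<or> c2 \<noteq> 0" "\<forall>i<n. P i k * c1 + P i b * c2 = 0"
    using dep_two[OF nodep[rule_format, OF k b False] False] by blast
  have ea: "P a k * c1 = - (P a b * c2)" using c(2) a by (simp add: eq_neg_iff_add_eq_0)
  have el: "P l k * c1 = - (P l b * c2)" using c(2) l by (simp add: eq_neg_iff_add_eq_0)
  have lc: "\<And>x y z::'a. x * (y * z) = y * (x * z)" by (metis comm mult.assoc)
  show ?thesis
  proof (cases "c1 = 0")
    case False
    have "(P a k * P l b - P a b * P l k) * c1 = P l b * (P a k * c1) - P a b * (P l k * c1)"
      by (simp add: algebra_simps comm lc)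
    also have "\<dots> = 0" unfolding ea el by (simp add: algebra_simps comm lc)
    finally show ?thesis using False by simp
  next
    case True
    then have c2: "c2 \<noteq> 0" using c(1) by simp
    have eb: "P a b * c2 = - (P a k * c1)" using ea by simp
    have eb2: "P l b * c2 = - (P l k * c1)" using el by simp
    have "(P a k * P l b - P a b * P l k) * c2 = P a k * (P l b * c2) - P l k * (P a b * c2)"
      by (simp add: algebra_simps comm lc)
    also have "\<dots> = 0" unfolding eb eb2 by (simp add: algebra_simps comm lc)
    finally show ?thesis using c2 by simp
  qed
qed

definition phi :: "nat \<Rightarrow> nat \<Rightarrow> (nat \<Rightarrow> 'a::ring) \<Rightarrow> (nat \<Rightarrow> 'a) \<Rightarrow> (nat \<Rightarrow> nat \<Rightarrow> 'a) \<Rightarrow> 'a" where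
  "phi m n \<alpha> \<beta> X = (\<Sum>k<m. \<beta> k * (\<Sum>l<n. X k l * \<alpha> l))"

lemma sandwich_fact:
  fixes P :: "nat \<Rightarrow> nat \<Rightarrow> 'a::division_ring"
  assumes comm: "\<And>x y::'a. x * y = y * x"
    and fac: "\<forall>l<n. \<forall>k<m. P l k = \<alpha> l * \<beta> k"
  shows "sandwich m n P X Y = (\<lambda>k s. (\<Sum>l<n. X k l * \<alpha> l) * (\<Sum>k'<m. \<beta> k' * Y k' s))"
proof (intro ext)
  fix k s
  have "sandwich m n P X Y k s = (\<Sum>k'<m. (\<Sum>l<n. X k l * (\<alpha> l * \<beta> k')) * Y k' s)"
    unfolding sandwich_def mat_mult_def by (intro sum.cong refl) (simp add: fac)
  also have "\<dots> = (\<Sum>k'<m. \<Sum>l<n. X k l * \<alpha> l * (\<beta> k' * Y k' s))"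
    by (simp add: sum_distrib_right mult.assoc)
  also have "\<dots> = (\<Sum>l<n. \<Sum>k'<m. X k l * \<alpha> l * (\<beta> k' * Y k' s))"
    by (rule sum.swap)
  also have "\<dots> = (\<Sum>l<n. X k l * \<alpha> l) * (\<Sum>k'<m. \<beta> k' * Y k' s)"
    by (rule sum_product[symmetric])
  finally show "sandwich m n P X Y k s = (\<Sum>l<n. X k l * \<alpha> l) * (\<Sum>k'<m. \<beta> k' * Y k' s)" .
qed

lemma phi_mult:
  fixes P :: "nat \<Rightarrow> nat \<Rightarrow> 'a::division_ring"
  assumes comm: "\<And>x y::'a. x * y = y * x"
    and fac: "\<forall>l<n. \<forall>k<m. P l k = \<alpha> l * \<beta> k"
  shows "phi m n \<alpha> \<beta> (sandwich m n P X Y) = phi m n \<alpha> \<beta> X * phi m n \<alpha> \<beta> Y"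
proof -
  define XA where "XA = (\<lambda>k. \<Sum>l<n. X k l * \<alpha> l)"
  define BY where "BY = (\<lambda>s. \<Sum>k'<m. \<beta> k' * Y k' s)"
  have sf: "sandwich m n P X Y = (\<lambda>k s. XA k * BY s)"
    unfolding XA_def BY_def by (rule sandwich_fact[OF comm fac])
  have "phi m n \<alpha> \<beta> (sandwich m n P X Y) = (\<Sum>k<m. \<beta> k * (\<Sum>s<n. XA k * BY s * \<alpha> s))"
    unfolding phi_def sf by simp
  also have "\<dots> = (\<Sum>k<m. (\<beta> k * XA k) * (\<Sum>s<n. BY s * \<alpha> s))"
    by (simp add: sum_distrib_left mult.assoc)
  also have "\<dots> = (\<Sum>k<m. \<beta> k * XA k) * (\<Sum>s<n. BY s * \<alpha> s)"
    by (simp add: sum_distrib_right)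
  also have "(\<Sum>k<m. \<beta> k * XA k) = phi m n \<alpha> \<beta> X" unfolding phi_def XA_def ..
  also have "(\<Sum>s<n. BY s * \<alpha> s) = (\<Sum>s<n. \<Sum>k'<m. \<beta> k' * (Y k' s * \<alpha> s))"
    unfolding BY_def by (simp add: sum_distrib_right mult.assoc)
  also have "\<dots> = (\<Sum>k'<m. \<Sum>s<n. \<beta> k' * (Y k' s * \<alpha> s))" by (rule sum.swap)
  also have "\<dots> = phi m n \<alpha> \<beta> Y" unfolding phi_def by (simp add: sum_distrib_left)
  finally show ?thesis .
qed

lemma phi_sub: "phi m n \<alpha> \<beta> (mat_sub A B) = phi m n \<alpha> \<beta> A - phi m n \<alpha> \<beta> (B::nat\<Rightarrow>nat\<Rightarrow>'a::ring)"
  unfolding phi_def mat_sub_def by (simp add: algebra_simps sum_subtractf)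

lemma phi_add: "phi m n \<alpha> \<beta> (mat_add A B) = phi m n \<alpha> \<beta> A + phi m n \<alpha> \<beta> (B::nat\<Rightarrow>nat\<Rightarrow>'a::ring)"
  unfolding phi_def mat_add_def by (simp add: algebra_simps sum.distrib)

lemma phi_fin_sums:
  fixes P :: "nat \<Rightarrow> nat \<Rightarrow> 'a::division_ring"
  assumes comm: "\<And>x y::'a. x * y = y * x"
    and fac: "\<forall>l<n. \<forall>k<m. P l k = \<alpha> l * \<beta> k"
    and x: "x \<in> fin_sums (comm_prods m n P)"
  shows "phi m n \<alpha> \<beta> x = 0"
  using x
proof induct
  case zero
  then show ?case unfolding phi_def by simp
next
  case (add x y)
  have pc: "phi m n \<alpha> \<beta> (comm m n P A B) = 0" for A B
    unfolding comm_def phi_sub phi_mult[OF comm fac] by (simp add: comm)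
  from add(1) obtain a b c d where "x = sandwich m n P (comm m n P a b) (comm m n P c d)"
    unfolding comm_prods_def by blast
  then have "phi m n \<alpha> \<beta> x = 0" by (simp add: phi_mult[OF comm fac] pc)
  then show ?case using add by (simp add: phi_add)
qed



theorem theorem2p5:
  fixes P :: "nat \<Rightarrow> nat \<Rightarrow> 'a::division_ring" and m n r :: nat
  assumes "2 \<le> m" and "2 \<le> n"
    and "P \<in> mat_set n m"
    and "mat_rank n m P = r"
  shows "(r \<ge> 2 \<longrightarrow> mat_set m n = fin_sums (comm_prods m n P))
       \<and> (r = 1 \<longrightarrow> (mat_set m n = fin_sums (comm_prods m n P)
                        \<longleftrightarrow> \<not> (\<forall>a b :: 'a. a * b = b * a)))"
proof -
  have sub: "fin_sums (comm_prods m n P) \<subseteq> mat_set m n" by (rule fin_sums_sub)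
  obtain S where S: "S \<subseteq> {..<m}" "cols_indep n P S" "card S = r"
    using rank_obtain[of m n P] assms(4) by blast
  have finS: "finite S" using S(1) finite_subset by blast
  have part1: "r \<ge> 2 \<longrightarrow> mat_set m n = fin_sums (comm_prods m n P)"
  proof
    assume r2: "r \<ge> 2"
    then have "S \<noteq> {}" using S(3) by auto
    then obtain k1 where k1: "k1 \<in> S" by blast
    have c1: "card (S - {k1}) \<ge> 1" using S(3) r2 k1 finS by (simp add: card_Diff_singleton)
    have "S - {k1} \<noteq> {}"
    proof
      assume "S - {k1} = {}"
      then have "card (S - {k1}) = 0" by (metis card.empty)
      then show False using c1 by simp
    qed
    then obtain k2 where k2: "k2 \<in> S" "k2 \<noteq> k1" by blast
    have ind: "\<forall>c1 c2. (\<forall>i<n. P i k1 * c1 + P i k2 * c2 = 0) \<longrightarrow> c1 = 0 \<and> c2 = 0"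
      using indep_two[OF S(2) finS k1 k2(1) k2(2)[symmetric]] by blast
    have k1m: "k1 < m" and k2m: "k2 < m" using k1 k2(1) S(1) by auto
    obtain u1 u2 z1 z2 where d: "vec_in m u1" "vec_in m u2" "vec_in n z1" "vec_in n z2"
      "bil m n P z1 u1 = 1" "bil m n P z2 u2 = 1" "bil m n P z2 u1 = 0" "bil m n P z1 u2 = 0"
      using dual_exists[OF k1m k2m ind] by (elim exE conjE)
    have "mat_set m n \<subseteq> fin_sums (comm_prods m n P)"
    proof
      fix X :: "nat \<Rightarrow> nat \<Rightarrow> 'a" assume "X \<in> mat_set m n"
      then show "X \<in> fin_sums (comm_prods m n P)"
        by (rule decomp[rotated]) (rule rank2_outer[OF d])
    qed
    then show "mat_set m n = fin_sums (comm_prods m n P)" using sub by blast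
  qed
  have part2: "r = 1 \<longrightarrow> (mat_set m n = fin_sums (comm_prods m n P) \<longleftrightarrow> \<not> (\<forall>a b :: 'a. a * b = b * a))"
  proof
    assume r1: "r = 1"
    have cS: "card S = 1" using S(3) r1 by simp
    then obtain k where Sk: "S = {k}" by (rule card_1_singletonE)
    have km: "k < m" using S(1) Sk by auto
    have "\<exists>s<n. P s k \<noteq> 0"
    proof (rule ccontr)
      assume "\<not> ?thesis"
      then have "\<forall>i<n. P i k = 0" by blast
      then have h0: "\<forall>i<n. (\<Sum>j\<in>{k}. P i j * (\<lambda>_. 1::'a) j) = 0" by simp
      have ci: "cols_indep n P {k}" using S(2) Sk by simp
      have "\<forall>j\<in>{k}. (\<lambda>_. 1::'a) j = 0" by (rule mp[OF spec[OF ci[unfolded cols_indep_def]] h0])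
      then show False by simp
    qed
    then obtain s where s: "s < n" "P s k \<noteq> 0" by blast
    define a0 where "a0 = P s k"
    have a0: "a0 \<noteq> 0" using s a0_def by simp
    have nodep: "\<forall>k' b. k' < m \<longrightarrow> b < m \<longrightarrow> k' \<noteq> b \<longrightarrow> \<not> cols_indep n P {k', b}"
    proof (intro allI impI notI)
      fix k' b assume h: "k' < m" "b < m" "k' \<noteq> b" "cols_indep n P {k', b}"
      have sub2: "{k', b} \<subseteq> {..<m}" using h(1,2) by simp
      have "card {k', b} \<le> mat_rank n m P" by (rule rank_ge[OF sub2 h(4)])
      moreover have "card {k', b} = 2" using h(3) by simp
      ultimately show False using assms(4) r1 by simp
    qed
    show "mat_set m n = fin_sums (comm_prods m n P) \<longleftrightarrow> \<not> (\<forall>a b :: 'a. a * b = b * a)"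
    proof
      assume eq: "mat_set m n = fin_sums (comm_prods m n P)"
      show "\<not> (\<forall>a b :: 'a. a * b = b * a)"
      proof
        assume "\<forall>a b :: 'a. a * b = b * a"
        then have comm: "\<And>x y :: 'a. x * y = y * x" by blast
        have lc: "\<And>x y z::'a. x * (y * z) = y * (x * z)" by (metis comm mult.assoc)
        define \<alpha> where "\<alpha> = (\<lambda>l. P l k * inverse a0)"
        define \<beta> where "\<beta> = (\<lambda>k'. P s k')"
        have fac: "\<forall>l<n. \<forall>k'<m. P l k' = \<alpha> l * \<beta> k'"
        proof (intro allI impI)
          fix l k' assume l: "l < n" and k': "k' < m"
          have mi: "P l k' * P s k = P l k * P s k'" by (rule minor_id[OF comm nodep l s(1) k' km])
          have "P l k' = P l k' * a0 * inverse a0" using a0 by (simp add: mult.assoc)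
          also have "\<dots> = P l k * P s k' * inverse a0" using mi a0_def by simp
          also have "\<dots> = \<alpha> l * \<beta> k'" unfolding \<alpha>_def \<beta>_def by (simp add: mult.assoc comm lc)
          finally show "P l k' = \<alpha> l * \<beta> k'" .
        qed
        define E where "E = (\<lambda>i j. if i = k \<and> j = s then 1 else (0::'a))"
        have Ein: "E \<in> mat_set m n" unfolding E_def mat_set_def using km s(1) by auto
        then have "phi m n \<alpha> \<beta> E = 0" using phi_fin_sums[OF comm fac] eq by blast
        moreover have "phi m n \<alpha> \<beta> E = \<beta> k * \<alpha> s"
        proof -
          have inner: "(\<Sum>l<n. E k' l * \<alpha> l) = (if k' = k then \<alpha> s else 0)" for k'
          proof -
            have "(\<Sum>l<n. E k' l * \<alpha> l) = (\<Sum>l<n. if l = s then (if k' = k then \<alpha> s else 0) else 0)"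
              by (rule sum.cong) (auto simp: E_def)
            also have "\<dots> = (if k' = k then \<alpha> s else 0)" using s(1) by simp
            finally show ?thesis .
          qed
          have "phi m n \<alpha> \<beta> E = (\<Sum>k'<m. if k' = k then \<beta> k * \<alpha> s else 0)"
            unfolding phi_def inner by (rule sum.cong) auto
          also have "\<dots> = \<beta> k * \<alpha> s" using km by simp
          finally show ?thesis .
        qed
        moreover have "\<beta> k * \<alpha> s = a0" unfolding \<alpha>_def \<beta>_def a0_def using a0 a0_def
          by (simp add: mult.assoc[symmetric])
        ultimately show False using a0 by simp
      qed
    next
      assume "\<not> (\<forall>a b :: 'a. a * b = b * a)"
      then obtain a b :: 'a where ab: "a * b \<noteq> b * a" by blast
      define w where "w = (\<lambda>k'. if k' = k then inverse a0 else (0::'a))"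
      define z where "z = (\<lambda>l. if l = s then 1 else (0::'a))"
      have bzw: "bil m n P z w = 1"
      proof -
        have "bil m n P z w = (\<Sum>l<n. z l * P l k) * inverse a0" unfolding w_def by (rule bil_single[OF km])
        also have "(\<Sum>l<n. z l * P l k) = (\<Sum>l<n. if l = s then a0 else 0)"
          by (rule sum.cong) (auto simp: z_def a0_def)
        also have "\<dots> = a0" using s(1) by simp
        finally show ?thesis using a0 by simp
      qed
      have w: "vec_in m w" unfolding w_def vec_in_def using km by auto
      have z: "vec_in n z" unfolding z_def vec_in_def using s(1) by auto
      have "mat_set m n \<subseteq> fin_sums (comm_prods m n P)"
      proof
        fix X :: "nat \<Rightarrow> nat \<Rightarrow> 'a" assume "X \<in> mat_set m n"
        then show "X \<in> fin_sums (comm_prods m n P)"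
          by (rule decomp[rotated]) (rule rank1_outer[OF w z bzw ab])
      qed
      then show "mat_set m n = fin_sums (comm_prods m n P)" using sub by blast
    qed
  qed
  show ?thesis using part1 part2 by blast
qed


end
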